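(* Let $L$ be a finite commutative C-loop. Then $L$ is (isomorphic to, via $(u,v)\mapsto uv$) the direct product $U\times V$, where $U=\{x\in L: |x|\text{ is a power of }2\}$ and $V=\{x\in L: |x|\text{ is odd}\}$; here $V$ is a commutative group and $U$ is a commutative C-loop in which every element has order a power of $2$. Consequently every finite commutative C-loop is a direct product of a finite commutative group and a finite commutative $2$-C-loop.
   Context: A C-loop is a loop satisfying $x(y(yz))=((xy)y)z$ for all $x,y,z$; C-loops are power associative and $|x|$ denotes the order of $x$, the least $n>0$ with $x^n=e$. A $2$-loop is a finite power associative loop of exponent $2^s$ for some $s$ (every element has order a power of $2$). *)

theory Defs
  imports Main
begin

definition loop :: "'a set \<Rightarrow> ('a \<Rightarrow> 'a \<Rightarrow> 'a) \<Rightarrow> 'a \<Rightarrow> bool" where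
  "loop L m e \<longleftrightarrow> e \<in> L \<and> (\<forall>x\<in>L. \<forall>y\<in>L. m x y \<in> L)
     \<and> (\<forall>x\<in>L. m e x = x \<and> m x e = x)
     \<and> (\<forall>a\<in>L. \<forall>b\<in>L. \<exists>!x. x \<in> L \<and> m a x = b)
     \<and> (\<forall>a\<in>L. \<forall>b\<in>L. \<exists>!y. y \<in> L \<and> m y a = b)"

definition commutative_on :: "'a set \<Rightarrow> ('a \<Rightarrow> 'a \<Rightarrow> 'a) \<Rightarrow> bool" where
  "commutative_on L m \<longleftrightarrow> (\<forall>x\<in>L. \<forall>y\<in>L. m x y = m y x)"

definition C_loop :: "'a set \<Rightarrow> ('a \<Rightarrow> 'a \<Rightarrow> 'a) \<Rightarrow> 'a \<Rightarrow> bool" where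
  "C_loop L m e \<longleftrightarrow> loop L m e \<and>
     (\<forall>x\<in>L. \<forall>y\<in>L. \<forall>z\<in>L. m x (m y (m y z)) = m (m (m x y) y) z)"

definition group_loop :: "'a set \<Rightarrow> ('a \<Rightarrow> 'a \<Rightarrow> 'a) \<Rightarrow> 'a \<Rightarrow> bool" where
  "group_loop L m e \<longleftrightarrow> loop L m e \<and>
     (\<forall>x\<in>L. \<forall>y\<in>L. \<forall>z\<in>L. m (m x y) z = m x (m y z))"

text \<open>Powers (C-loops are power associative, so the bracketing does not matter).\<close>
fun lpow :: "('a \<Rightarrow> 'a \<Rightarrow> 'a) \<Rightarrow> 'a \<Rightarrow> 'a \<Rightarrow> nat \<Rightarrow> 'a" where
  "lpow m e x 0 = e"
| "lpow m e x (Suc n) = m x (lpow m e x n)"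

definition elem_ord :: "('a \<Rightarrow> 'a \<Rightarrow> 'a) \<Rightarrow> 'a \<Rightarrow> 'a \<Rightarrow> nat" where
  "elem_ord m e x = (LEAST n. n > 0 \<and> lpow m e x n = e)"

end

theory Submission
  imports Defs "HOL-Computational_Algebra.Primes"
begin
locale ccl =
  fixes L :: "'a set" and m :: "'a \<Rightarrow> 'a \<Rightarrow> 'a" and e :: 'a
  assumes fin: "finite L" and CL: "C_loop L m e" and comm: "commutative_on L m"
begin

lemma lp: "loop L m e" using CL unfolding C_loop_def by (rule conjunct1)
lemma lp2: "e \<in> L" "\<forall>x\<in>L. \<forall>y\<in>L. m x y \<in> L" "\<forall>x\<in>L. m e x = x \<and> m x e = x"
     "\<forall>a\<in>L. \<forall>b\<in>L. \<exists>!x. x \<in> L \<and> m a x = b"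
     "\<forall>a\<in>L. \<forall>b\<in>L. \<exists>!y. y \<in> L \<and> m y a = b"
  using lp unfolding loop_def by simp_all
lemma e_in: "e \<in> L" by (rule lp2(1))
lemma cl: "x \<in> L \<Longrightarrow> y \<in> L \<Longrightarrow> m x y \<in> L" using lp2(2) by simp
lemma lid: "x \<in> L \<Longrightarrow> m e x = x" using lp2(3) by simp
lemma rid: "x \<in> L \<Longrightarrow> m x e = x" using lp2(3) by simp
lemma ldiv: "a \<in> L \<Longrightarrow> b \<in> L \<Longrightarrow> \<exists>!x. x \<in> L \<and> m a x = b" using lp2(4) by simp
lemma rdiv: "a \<in> L \<Longrightarrow> b \<in> L \<Longrightarrow> \<exists>!y. y \<in> L \<and> m y a = b" using lp2(5) by simp
lemma com: "x \<in> L \<Longrightarrow> y \<in> L \<Longrightarrow> m x y = m y x" using comm unfolding commutative_on_def by simp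
lemma claw: "x \<in> L \<Longrightarrow> y \<in> L \<Longrightarrow> z \<in> L \<Longrightarrow> m x (m y (m y z)) = m (m (m x y) y) z"
  using CL unfolding C_loop_def by simp

lemma lcancel: assumes a: "a \<in> L" and x: "x \<in> L" and y: "y \<in> L" and eq: "m a x = m a y" shows "x = y"
proof -
  have u: "\<exists>!z. z \<in> L \<and> m a z = m a x" using ldiv[OF a cl[OF a x]] .
  have 1: "(THE z. z \<in> L \<and> m a z = m a x) = x" using the1_equality[OF u] x by simp
  have 2: "(THE z. z \<in> L \<and> m a z = m a x) = y" using the1_equality[OF u] y eq by simp
  show ?thesis using 1 2 by simp
qed

lemma lap: assumes y: "y \<in> L" and z: "z \<in> L" shows "m y (m y z) = m (m y y) z"
proof -
  have "m e (m y (m y z)) = m (m (m e y) y) z" using claw[OF e_in y z] .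
  then show ?thesis using lid[OF y] lid[OF cl[OF y cl[OF y z]]] by simp
qed

definition inv where "inv x = (THE y. y \<in> L \<and> m x y = e)"

lemma inv0: assumes "x \<in> L" shows "inv x \<in> L \<and> m x (inv x) = e"
proof -
  have "\<exists>!y. y \<in> L \<and> m x y = e" using ldiv[OF assms e_in] .
  from theI'[OF this] show ?thesis unfolding inv_def .
qed

lemma inv: assumes "x \<in> L" shows "inv x \<in> L" "m x (inv x) = e"
  using inv0[OF assms] by simp_all

lemma inv_unique: assumes "x \<in> L" "y \<in> L" "m x y = e" shows "inv x = y"
  using lcancel[of x "inv x" y] inv[OF assms(1)] assms by simp

lemma rip: assumes "w \<in> L" "y \<in> L" shows "m (m w y) (inv y) = w"
proof -
  obtain x where x: "x \<in> L" "m x y = w" using rdiv[OF assms(2) assms(1)] by blast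
  have "m x (m y (m y (inv y))) = m (m (m x y) y) (inv y)" using claw x assms inv by blast
  then show ?thesis using inv[OF assms(2)] rid assms x by simp
qed

lemma lip: assumes w: "w \<in> L" and y: "y \<in> L" shows "m (inv y) (m y w) = w"
proof -
  have "m (inv y) (m y w) = m (m y w) (inv y)" using com[of "inv y" "m y w"] inv(1)[OF y] cl[OF y w] by simp
  also have "\<dots> = m (m w y) (inv y)" using com[OF y w] by simp
  also have "\<dots> = w" using rip[OF w y] .
  finally show ?thesis .
qed

lemma inv_inv: "x \<in> L \<Longrightarrow> inv (inv x) = x"
  using inv_unique[of "inv x" x] inv[of x] com[of "inv x" x] by simp

lemma inv_e: "inv e = e" using inv_unique[of e e] e_in rid by simp

lemma inv_mult: assumes "x \<in> L" "y \<in> L" shows "inv (m x y) = m (inv x) (inv y)"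
proof -
  define z where "z = m x y"
  have z: "z \<in> L" using z_def cl assms by simp
  have 1: "y = m (inv x) z" using lip assms z_def by simp
  have 2: "m y (inv z) = inv x" using 1 rip[of "inv x" z] inv assms z by simp
  have "inv z = m (inv y) (m y (inv z))" using lip inv z assms by simp
  also have "\<dots> = m (inv y) (inv x)" using 2 by simp
  finally show ?thesis using z_def com[OF inv(1)[OF assms(2)] inv(1)[OF assms(1)]] by simp
qed

definition nuc where "nuc a \<longleftrightarrow> a \<in> L \<and> (\<forall>p\<in>L. \<forall>q\<in>L. m (m a p) q = m a (m p q))"

lemma nucL: "nuc a \<Longrightarrow> a \<in> L" unfolding nuc_def by simp
lemma nuc1: "nuc a \<Longrightarrow> p \<in> L \<Longrightarrow> q \<in> L \<Longrightarrow> m (m a p) q = m a (m p q)" unfolding nuc_def by simp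
lemma nuc2: assumes n: "nuc a" and p: "p \<in> L" and q: "q \<in> L" shows "m (m p a) q = m p (m a q)"
proof -
  have a: "a \<in> L" using n nucL by simp
  have "m (m p a) q = m (m a p) q" using com[OF p a] by simp
  also have "\<dots> = m a (m p q)" using nuc1[OF n p q] .
  also have "\<dots> = m a (m q p)" using com[OF p q] by simp
  also have "\<dots> = m (m a q) p" using nuc1[OF n q p] by simp
  also have "\<dots> = m p (m a q)" using com[OF cl[OF a q] p] .
  finally show ?thesis .
qed
lemma nuc3: assumes n: "nuc a" and p: "p \<in> L" and q: "q \<in> L" shows "m (m p q) a = m p (m q a)"
proof -
  have a: "a \<in> L" using n nucL by simp
  have "m (m p q) a = m a (m p q)" using com[OF cl[OF p q] a] .
  also have "\<dots> = m (m a p) q" using nuc1[OF n p q] by simp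
  also have "\<dots> = m (m p a) q" using com[OF p a] by simp
  also have "\<dots> = m p (m a q)" using nuc2[OF n p q] .
  also have "\<dots> = m p (m q a)" using com[OF a q] by simp
  finally show ?thesis .
qed

lemma mid_nuc: assumes a: "a \<in> L" and mid: "\<And>x z. x \<in> L \<Longrightarrow> z \<in> L \<Longrightarrow> m (m x a) z = m x (m a z)"
  shows "nuc a"
proof -
  have ia: "inv a \<in> L" using inv(1)[OF a] .
  have key: "m (m a (inv z)) (m z y) = m a y" if z: "z \<in> L" and y: "y \<in> L" for z y
  proof -
    define x where "x = m z (inv a)"
    have x: "x \<in> L" using x_def cl[OF z ia] by simp
    have xa: "m x a = z" using rip[OF z ia] inv_inv[OF a] x_def by simp
    have "m z y = m x (m a y)" using mid[OF x y] xa by simp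
    then have 1: "m (inv x) (m z y) = m a y" using lip[OF cl[OF a y] x] by simp
    have "inv x = m (inv z) a" using inv_mult[OF z ia] x_def inv_inv[OF a] by simp
    also have "\<dots> = m a (inv z)" using com[OF inv(1)[OF z] a] .
    finally show ?thesis using 1 by simp
  qed
  show ?thesis unfolding nuc_def
  proof (intro conjI a ballI)
    fix p q assume p: "p \<in> L" and q: "q \<in> L"
    have "m (m a (inv (inv p))) (m (inv p) (m p q)) = m a (m p q)"
      using key[OF inv(1)[OF p] cl[OF p q]] .
    then show "m (m a p) q = m a (m p q)" using inv_inv[OF p] lip[OF q p] by simp
  qed
qed

lemma sq_nuc: assumes x: "x \<in> L" shows "nuc (m x x)"
proof (rule mid_nuc)
  show "m x x \<in> L" using cl[OF x x] .
  fix y z assume y: "y \<in> L" and z: "z \<in> L"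
  have "m y (m x (m x z)) = m (m (m y x) x) z" using claw[OF y x z] .
  moreover have "m x (m x z) = m (m x x) z" using lap[OF x z] .
  moreover have "m (m y x) x = m y (m x x)"
  proof -
    have "m (m y x) x = m x (m y x)" using com[OF cl[OF y x] x] .
    also have "\<dots> = m x (m x y)" using com[OF y x] by simp
    also have "\<dots> = m (m x x) y" using lap[OF x y] .
    also have "\<dots> = m y (m x x)" using com[OF cl[OF x x] y] .
    finally show ?thesis .
  qed
  ultimately show "m (m y (m x x)) z = m y (m (m x x) z)" by simp
qed

lemma nuc_e: "nuc e" unfolding nuc_def using e_in lid cl by simp

lemma nuc_mult: assumes na: "nuc a" and nb: "nuc b" shows "nuc (m a b)"
  unfolding nuc_def
proof (intro conjI ballI)
  have a: "a \<in> L" and b: "b \<in> L" using na nb nucL by auto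
  show "m a b \<in> L" using cl[OF a b] .
  fix p q assume p: "p \<in> L" and q: "q \<in> L"
  have "m (m (m a b) p) q = m (m a (m b p)) q" using nuc1[OF na b p] by simp
  also have "\<dots> = m a (m (m b p) q)" using nuc1[OF na cl[OF b p] q] .
  also have "\<dots> = m a (m b (m p q))" using nuc1[OF nb p q] by simp
  also have "\<dots> = m (m a b) (m p q)" using nuc1[OF na b cl[OF p q]] by simp
  finally show "m (m (m a b) p) q = m (m a b) (m p q)" .
qed

lemma nuc_inv: assumes n: "nuc a" shows "nuc (inv a)"
  unfolding nuc_def
proof (intro conjI ballI)
  have a: "a \<in> L" using n nucL by auto
  show ia: "inv a \<in> L" using inv(1)[OF a] .
  fix p q assume p: "p \<in> L" and q: "q \<in> L"
  have l1: "m a (m (inv a) w) = w" if w: "w \<in> L" for w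
    using lip[OF w ia] inv_inv[OF a] by simp
  have "m a (m (m (inv a) p) q) = m (m a (m (inv a) p)) q" using nuc1[OF n cl[OF ia p] q] by simp
  also have "\<dots> = m p q" using l1[OF p] by simp
  also have "\<dots> = m a (m (inv a) (m p q))" using l1[OF cl[OF p q]] by simp
  finally show "m (m (inv a) p) q = m (inv a) (m p q)"
    using lcancel[OF a cl[OF cl[OF ia p] q] cl[OF ia cl[OF p q]]] by simp
qed

end
context ccl
begin

lemma parity_cases2: "\<exists>a. (i::nat) = 2 * a \<or> i = Suc (2 * a)"
  by presburger

abbreviation pw where "pw x n \<equiv> lpow m e x n"

lemma pw_in: "x \<in> L \<Longrightarrow> pw x n \<in> L"
  by (induction n) (auto simp: e_in cl)

lemma pw_nuc: "nuc z \<Longrightarrow> nuc (pw z n)"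
  by (induction n) (auto simp: nuc_e nuc_mult)

lemma pw_add_nuc: assumes "nuc z" shows "pw z (a + b) = m (pw z a) (pw z b)"
proof (induction a)
  case 0 then show ?case using lid pw_in nucL assms by simp
next
  case (Suc a)
  have "pw z (Suc a + b) = m z (m (pw z a) (pw z b))" using Suc by simp
  also have "\<dots> = m (m z (pw z a)) (pw z b)" using nuc1[OF assms] pw_in nucL assms by simp
  finally show ?case by simp
qed

lemma pw_even: assumes x: "x \<in> L" shows "pw x (2 * k) = pw (m x x) k"
proof (induction k)
  case 0 then show ?case by simp
next
  case (Suc k)
  have "pw x (2 * Suc k) = m x (m x (pw x (2 * k)))" by (simp add: numeral_2_eq_2)
  also have "\<dots> = m (m x x) (pw x (2 * k))" using lap x pw_in by simp
  finally show ?case using Suc by simp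
qed

lemma pw_odd: assumes x: "x \<in> L" shows "pw x (Suc (2 * k)) = m x (pw (m x x) k)"
  using pw_even[OF x] by simp

lemma pw_add: assumes x: "x \<in> L" shows "pw x (i + j) = m (pw x i) (pw x j)"
proof -
  define s where "s = m x x"
  have s: "nuc s" using sq_nuc x s_def by simp
  have sL: "s \<in> L" using s nucL by simp
  have ns: "\<And>a. nuc (pw s a)" using pw_nuc s by simp
  have sa: "\<And>a. pw s a \<in> L" using pw_in sL by simp
  obtain a where ia: "i = 2 * a \<or> i = Suc (2 * a)" using parity_cases2 by blast
  obtain b where jb: "j = 2 * b \<or> j = Suc (2 * b)" using parity_cases2 by blast
  from ia show ?thesis
  proof
    assume i: "i = 2 * a"
    from jb show ?thesis
    proof
      assume j: "j = 2 * b"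
      have "pw x (i + j) = pw x (2 * (a + b))" using i j by (simp add: algebra_simps)
      also have "\<dots> = pw s (a + b)" using pw_even[OF x, of "a + b"] s_def by (simp only:)
      also have "\<dots> = m (pw s a) (pw s b)" using pw_add_nuc[OF s] .
      finally show ?thesis using pw_even[OF x] s_def i j by simp
    next
      assume j: "j = Suc (2 * b)"
      have "pw x (i + j) = pw x (Suc (2 * (a + b)))" using i j by (simp add: algebra_simps)
      also have "\<dots> = m x (pw s (a + b))" using pw_odd[OF x, of "a + b"] s_def by (simp only:)
      also have "\<dots> = m x (m (pw s a) (pw s b))" using pw_add_nuc s by simp
      also have "\<dots> = m (m x (pw s a)) (pw s b)" using nuc3[OF ns x sa] by simp
      also have "\<dots> = m (m (pw s a) x) (pw s b)" using com[OF x sa] by simp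
      also have "\<dots> = m (pw s a) (m x (pw s b))" using nuc1[OF ns x sa] by simp
      finally show ?thesis using i j pw_even pw_odd x s_def by simp
    qed
  next
    assume i: "i = Suc (2 * a)"
    from jb show ?thesis
    proof
      assume j: "j = 2 * b"
      have "pw x (i + j) = pw x (Suc (2 * (a + b)))" using i j by (simp add: algebra_simps)
      also have "\<dots> = m x (pw s (a + b))" using pw_odd[OF x, of "a + b"] s_def by (simp only:)
      also have "\<dots> = m x (m (pw s a) (pw s b))" using pw_add_nuc s by simp
      also have "\<dots> = m (m x (pw s a)) (pw s b)" using nuc3[OF ns x sa] by simp
      finally show ?thesis using i j pw_even pw_odd x s_def by simp
    next
      assume j: "j = Suc (2 * b)"
      have "pw x (i + j) = pw x (2 * (Suc a + b))" using i j by (simp add: algebra_simps)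
      also have "\<dots> = pw s (Suc a + b)" using pw_even[OF x, of "Suc a + b"] s_def by (simp only:)
      also have "\<dots> = m (pw s (Suc a)) (pw s b)" using pw_add_nuc[OF s] by blast
      also have "\<dots> = m (m s (pw s a)) (pw s b)" by simp
      also have "\<dots> = m (m (m x x) (pw s a)) (pw s b)" using s_def by simp
      also have "\<dots> = m (m x (m x (pw s a))) (pw s b)" using lap x sa by simp
      also have "\<dots> = m (m (m x (pw s a)) x) (pw s b)" using com[OF x cl[OF x sa]] by simp
      also have "\<dots> = m (m x (pw s a)) (m x (pw s b))" using nuc3[OF ns] x sa cl by simp
      finally show ?thesis using i j pw_odd x s_def by simp
    qed
  qed
qed

lemma pw_mult: assumes x: "x \<in> L" shows "pw x (i * j) = pw (pw x i) j"
proof (induction j)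
  case 0 then show ?case by simp
next
  case (Suc j)
  have "pw x (i * Suc j) = pw x (i + i * j)" by simp
  also have "\<dots> = m (pw x i) (pw x (i * j))" using pw_add x by blast
  finally show ?case using Suc by simp
qed

lemma pw_e: "pw e n = e" by (induction n) (auto simp: lid e_in)

lemma pw_one: "x \<in> L \<Longrightarrow> pw x 1 = x" using rid by simp

lemma pw_inv: "x \<in> L \<Longrightarrow> pw (inv x) n = inv (pw x n)"
  by (induction n) (auto simp: inv_e inv_mult pw_in)

lemma pw_mult_nuc: assumes "nuc z" "nuc w" shows "pw (m z w) n = m (pw z n) (pw w n)"
proof (induction n)
  case 0 then show ?case using lid e_in by simp
next
  case (Suc n)
  have z: "z \<in> L" and w: "w \<in> L" using assms nucL by auto
  have zn: "nuc (pw z n)" and wn: "nuc (pw w n)" using pw_nuc assms by auto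
  have zl: "pw z n \<in> L" and wl: "pw w n \<in> L" using pw_in z w by auto
  have "pw (m z w) (Suc n) = m (m z w) (m (pw z n) (pw w n))" using Suc by simp
  also have "\<dots> = m z (m w (m (pw z n) (pw w n)))" using nuc1[OF assms(1)] w zl wl cl by simp
  also have "\<dots> = m z (m (m w (pw z n)) (pw w n))" using nuc1[OF assms(2)] zl wl by simp
  also have "\<dots> = m z (m (m (pw z n) w) (pw w n))" using com[OF w zl] by simp
  also have "\<dots> = m z (m (pw z n) (m w (pw w n)))" using nuc1[OF zn] w wl by simp
  also have "\<dots> = m (m z (pw z n)) (m w (pw w n))" using nuc1[OF assms(1)] zl w wl cl by simp
  finally show ?case by simp
qed

lemma sq_mult: assumes x: "x \<in> L" and y: "y \<in> L"
  shows "m (m x y) (m x y) = m (m x x) (m y y)"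
proof -
  have invx: "inv a = m a (inv (m a a))" if a: "a \<in> L" for a
  proof (rule inv_unique[OF a])
    show "m a (inv (m a a)) \<in> L" using cl inv a by simp
    show "m a (m a (inv (m a a))) = e" using lap[of a "inv (m a a)"] inv cl a by simp
  qed
  define w where "w = m x y"
  define s where "s = m x x"
  define t where "t = m y y"
  have wL: "w \<in> L" using w_def cl x y by simp
  have s: "nuc s" "s \<in> L" using s_def sq_nuc x cl by auto
  have t: "nuc t" "t \<in> L" using t_def sq_nuc y cl by auto
  have is_: "nuc (inv s)" "inv s \<in> L" using nuc_inv s inv by auto
  have it: "nuc (inv t)" "inv t \<in> L" using nuc_inv t inv by auto
  have "inv w = m (inv x) (inv y)" using inv_mult x y w_def by simp
  also have "\<dots> = m (m x (inv s)) (m y (inv t))" using invx x y s_def t_def by simp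
  also have "\<dots> = m (m (m x (inv s)) y) (inv t)" using nuc3[OF it(1)] x y is_ cl by simp
  also have "\<dots> = m (m (m (inv s) x) y) (inv t)" using com[OF x is_(2)] by simp
  also have "\<dots> = m (m (inv s) w) (inv t)" using nuc1[OF is_(1) x y] w_def by simp
  also have "\<dots> = m (m w (inv s)) (inv t)" using com[OF wL is_(2)] by simp
  also have "\<dots> = m w (m (inv s) (inv t))" using nuc3[OF it(1)] wL is_ by simp
  finally have 1: "inv w = m w (inv (m s t))" using inv_mult s t by simp
  have "inv w = m w (inv (m w w))" using invx wL by simp
  with 1 have "m w (inv (m w w)) = m w (inv (m s t))" by simp
  then have "inv (m w w) = inv (m s t)" using lcancel[OF wL] inv(1) cl[OF wL wL] cl[of s t] s t by blast
  then have "inv (inv (m w w)) = inv (inv (m s t))" by simp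
  then show ?thesis using inv_inv cl wL s t w_def s_def t_def by simp
qed

lemma ord_ex: assumes x: "x \<in> L" shows "\<exists>n>0. pw x n = e"
proof -
  have "\<not> inj_on (pw x) {0..card L}"
  proof
    assume "inj_on (pw x) {0..card L}"
    moreover have "pw x ` {0..card L} \<subseteq> L" using pw_in x by auto
    ultimately have "card {0..card L} \<le> card L" using card_inj_on_le fin by blast
    then show False by simp
  qed
  then obtain i j where ij: "i \<noteq> j" "pw x i = pw x j" unfolding inj_on_def by blast
  {
    fix i j assume ij: "i < j" "pw x i = pw x j"
    have "pw x j = m (pw x i) (pw x (j - i))" using pw_add[OF x, of i "j - i"] ij by simp
    then have "m (pw x i) e = m (pw x i) (pw x (j - i))" using ij rid pw_in x by simp
    then have "pw x (j - i) = e" using lcancel[of "pw x i" "pw x (j - i)" e] pw_in x e_in by simp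
    then have "\<exists>n>0. pw x n = e" using ij by (intro exI[of _ "j - i"]) simp
  }
  note * = this
  show ?thesis
  proof (cases "i < j")
    case True then show ?thesis using *[of i j] ij by blast
  next
    case False then have "j < i" using ij(1) by arith
    then show ?thesis using *[of j i] ij(2) by simp
  qed
qed

abbreviation ord where "ord x \<equiv> elem_ord m e x"

lemma ord: assumes x: "x \<in> L" shows "ord x > 0" "pw x (ord x) = e"
  using LeastI_ex[OF ord_ex[OF x]] unfolding elem_ord_def by auto

lemma ord_dvd: assumes x: "x \<in> L" shows "pw x n = e \<longleftrightarrow> ord x dvd n"
proof
  assume "ord x dvd n"
  then obtain q where "n = ord x * q" by auto
  then show "pw x n = e" using pw_mult x ord pw_e by simp
next
  assume h: "pw x n = e"
  define r where "r = n mod ord x"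
  have "n = ord x * (n div ord x) + r" using r_def by simp
  then have "pw x n = m (pw x (ord x * (n div ord x))) (pw x r)" using pw_add[OF x, of "ord x * (n div ord x)" r] by simp
  also have "\<dots> = pw x r" using pw_mult x ord pw_e lid pw_in by simp
  finally have pr: "pw x r = e" using h by simp
  have "r < ord x" using r_def ord x by simp
  then have "\<not> (r > 0 \<and> pw x r = e)" using not_less_Least unfolding elem_ord_def by blast
  then have "r = 0" using pr by simp
  then show "ord x dvd n" using r_def by auto
qed

lemma ord_one: assumes x: "x \<in> L" "ord x = 1" shows "x = e"
  using ord[OF x(1)] x pw_one by simp

lemma ord_e: "ord e = 1" using ord_dvd[OF e_in, of 1] rid e_in by simp

end
lemma dvd_pow2: "(d::nat) dvd 2 ^ k \<Longrightarrow> \<exists>j. d = 2 ^ j"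
  using divides_primepow_nat[of 2 d k] by auto

lemma split2: "(n::nat) > 0 \<Longrightarrow> \<exists>k q. n = 2 ^ k * q \<and> odd q"
proof (induction n rule: less_induct)
  case (less n)
  show ?case
  proof (cases "odd n")
    case True
    then have "n = 2 ^ 0 * n \<and> odd n" by simp
    then show ?thesis by blast
  next
    case False
    then obtain n' where n': "n = 2 * n'" by auto
    then have "n' < n" "n' > 0" using less by auto
    then obtain k q where "n' = 2 ^ k * q" "odd q" using less by blast
    then show ?thesis using n' by (intro exI[of _ "Suc k"] exI[of _ q]) auto
  qed
qed

context ccl
begin

definition UU where "UU = {x \<in> L. \<exists>k. ord x = 2 ^ k}"
definition VV where "VV = {x \<in> L. odd (ord x)}"

lemma odd_nuc: assumes x: "x \<in> L" and o: "odd (ord x)" shows "nuc x"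
proof -
  obtain k where k: "ord x = Suc (2 * k)" using o by (metis oddE Suc_eq_plus1)
  have "pw x (2 * Suc k) = pw x (ord x + 1)" using k by (simp del: lpow.simps)
  also have "\<dots> = m (pw x (ord x)) (pw x 1)" using pw_add[OF x] by blast
  also have "\<dots> = x" using ord[OF x] pw_one[OF x] lid[OF x] by simp
  finally have "x = pw (m x x) (Suc k)" using pw_even[OF x, of "Suc k"] by (simp only:)
  moreover have "nuc (pw (m x x) (Suc k))" using pw_nuc[OF sq_nuc[OF x]] by blast
  ultimately show ?thesis by simp
qed

lemma ord_inv_dvd: "x \<in> L \<Longrightarrow> ord (inv x) dvd ord x"
  using ord_dvd[of "inv x" "ord x"] inv pw_inv ord inv_e by simp

lemma U_inv: assumes x: "x \<in> UU" shows "inv x \<in> UU"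
proof -
  obtain k where xL: "x \<in> L" and k: "ord x = 2 ^ k" using x unfolding UU_def by auto
  have "ord (inv x) dvd 2 ^ k" using ord_inv_dvd[OF xL] k by simp
  then obtain j where "ord (inv x) = 2 ^ j" using dvd_pow2 by blast
  then show ?thesis using inv(1)[OF xL] unfolding UU_def by blast
qed

lemma V_inv: assumes x: "x \<in> VV" shows "inv x \<in> VV"
proof -
  have xL: "x \<in> L" and o: "odd (ord x)" using x unfolding VV_def by auto
  have d: "ord (inv x) dvd ord x" using ord_inv_dvd xL by simp
  have "odd (ord (inv x))" using o d dvd_trans[of 2 "ord (inv x)" "ord x"] by blast
  then show ?thesis using inv xL unfolding VV_def by simp
qed

lemma U_mult: assumes a: "a \<in> UU" and b: "b \<in> UU" shows "m a b \<in> UU"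
proof -
  obtain i j where aL: "a \<in> L" and bL: "b \<in> L" and i: "ord a = 2 ^ i" and j: "ord b = 2 ^ j"
    using a b unfolding UU_def by auto
  define w where "w = m a b"
  have wL: "w \<in> L" using cl aL bL w_def by simp
  define n where "n = (2::nat) ^ i * 2 ^ j"
  have "pw w (2 * n) = pw (m w w) n" using pw_even wL by simp
  also have "\<dots> = pw (m (m a a) (m b b)) n" using sq_mult aL bL w_def by simp
  also have "\<dots> = m (pw (m a a) n) (pw (m b b) n)" using pw_mult_nuc sq_nuc aL bL by simp
  also have "\<dots> = m (pw a (2 * n)) (pw b (2 * n))" using pw_even aL bL by simp
  also have "\<dots> = e"
  proof -
    have "pw a (2 * n) = e" using ord_dvd[OF aL] i n_def by simp
    moreover have "pw b (2 * n) = e" using ord_dvd[OF bL] j n_def by simp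
    ultimately show ?thesis using lid[OF e_in] by simp
  qed
  finally have "ord w dvd 2 ^ (Suc (i + j))" using ord_dvd wL n_def by (simp add: power_add)
  then obtain j' where "ord w = 2 ^ j'" using dvd_pow2 by blast
  then show ?thesis using wL w_def unfolding UU_def by blast
qed

lemma V_mult: assumes a: "a \<in> VV" and b: "b \<in> VV" shows "m a b \<in> VV"
proof -
  have aL: "a \<in> L" and bL: "b \<in> L" and oa: "odd (ord a)" and ob: "odd (ord b)"
    using a b unfolding VV_def by auto
  have na: "nuc a" and nb: "nuc b" using odd_nuc aL bL oa ob by auto
  define n where "n = ord a * ord b"
  have "pw (m a b) n = m (pw a n) (pw b n)" using pw_mult_nuc na nb by simp
  also have "\<dots> = e"
  proof -
    have "pw a n = e" using ord_dvd[OF aL] n_def by simp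
    moreover have "pw b n = e" using ord_dvd[OF bL] n_def by simp
    ultimately show ?thesis using lid[OF e_in] by simp
  qed
  finally have "ord (m a b) dvd n" using ord_dvd cl aL bL by simp
  moreover have "odd n" using oa ob n_def by simp
  ultimately have "odd (ord (m a b))" using dvd_trans by blast
  then show ?thesis using cl aL bL unfolding VV_def by simp
qed

lemma UL: "UU \<subseteq> L" and VL: "VV \<subseteq> L" unfolding UU_def VV_def by auto

lemma loop_sub: assumes S: "S \<subseteq> L" "e \<in> S" and mul: "\<And>a b. a \<in> S \<Longrightarrow> b \<in> S \<Longrightarrow> m a b \<in> S"
  and iv: "\<And>a. a \<in> S \<Longrightarrow> inv a \<in> S"
  shows "loop S m e"
  unfolding loop_def
proof (intro conjI ballI)
  show "e \<in> S" by (rule S(2))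
next
  fix x y assume "x \<in> S" "y \<in> S" then show "m x y \<in> S" by (rule mul)
next
  fix x assume "x \<in> S" then have xL: "x \<in> L" using S(1) by blast
  show "m e x = x" by (rule lid[OF xL])
  show "m x e = x" by (rule rid[OF xL])
next
  fix a b assume a: "a \<in> S" and b: "b \<in> S"
  have aL: "a \<in> L" using a S(1) by blast
  have bL: "b \<in> L" using b S(1) by blast
  have iaL: "inv a \<in> L" by (rule inv(1)[OF aL])
  have cL: "m (inv a) b \<in> L" by (rule cl[OF iaL bL])
  have ex: "m (inv a) b \<in> S" by (rule mul[OF iv[OF a] b])
  have eq: "m a (m (inv a) b) = b" using lip[OF bL iaL] inv_inv[OF aL] by simp
  have eq2: "m (m (inv a) b) a = b" using eq com[OF cL aL] by simp
  show "\<exists>!x. x \<in> S \<and> m a x = b"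
  proof (rule ex1I[of _ "m (inv a) b"])
    show "m (inv a) b \<in> S \<and> m a (m (inv a) b) = b" using ex eq by blast
    fix x assume h: "x \<in> S \<and> m a x = b"
    then have xL: "x \<in> L" using S(1) by blast
    have "m a x = m a (m (inv a) b)" using h eq by simp
    then show "x = m (inv a) b" by (rule lcancel[OF aL xL cL])
  qed
  show "\<exists>!y. y \<in> S \<and> m y a = b"
  proof (rule ex1I[of _ "m (inv a) b"])
    show "m (inv a) b \<in> S \<and> m (m (inv a) b) a = b" using ex eq2 by blast
    fix x assume h: "x \<in> S \<and> m x a = b"
    then have xL: "x \<in> L" using S(1) by blast
    have "m a x = m x a" by (rule com[OF aL xL])
    then have "m a x = m a (m (inv a) b)" using h eq by simp
    then show "x = m (inv a) b" by (rule lcancel[OF aL xL cL])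
  qed
qed

lemma main:
  shows "group_loop VV m e \<and> commutative_on VV m
       \<and> C_loop UU m e \<and> commutative_on UU m
       \<and> (\<forall>x\<in>UU. \<exists>k. elem_ord m e x = 2 ^ k)
       \<and> bij_betw (\<lambda>(u, v). m u v) (UU \<times> VV) L
       \<and> (\<forall>u1\<in>UU. \<forall>u2\<in>UU. \<forall>v1\<in>VV. \<forall>v2\<in>VV.
            m (m u1 v1) (m u2 v2) = m (m u1 u2) (m v1 v2))"
proof (intro conjI)
  have "ord e = 2 ^ 0" using ord_e by simp
  then have eU: "e \<in> UU" using e_in unfolding UU_def by blast
  have eV: "e \<in> VV" using ord_e e_in unfolding VV_def by simp
  have lU: "loop UU m e" by (rule loop_sub[OF UL eU U_mult U_inv])
  have lV: "loop VV m e" by (rule loop_sub[OF VL eV V_mult V_inv])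
  have nV: "nuc v" if v: "v \<in> VV" for v
  proof -
    have "v \<in> L" "odd (ord v)" using v unfolding VV_def by auto
    then show ?thesis using odd_nuc by blast
  qed
  show "group_loop VV m e" unfolding group_loop_def
  proof (intro conjI lV ballI)
    fix x y z assume "x \<in> VV" "y \<in> VV" "z \<in> VV"
    then show "m (m x y) z = m x (m y z)" using nuc1[OF nV[of x]] VL by blast
  qed
  show "commutative_on VV m" unfolding commutative_on_def
  proof (intro ballI)
    fix x y assume "x \<in> VV" "y \<in> VV"
    then have "x \<in> L" "y \<in> L" using VL by auto
    then show "m x y = m y x" by (rule com)
  qed
  show "commutative_on UU m" unfolding commutative_on_def
  proof (intro ballI)
    fix x y assume "x \<in> UU" "y \<in> UU"
    then have "x \<in> L" "y \<in> L" using UL by auto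
    then show "m x y = m y x" by (rule com)
  qed
  show "C_loop UU m e" unfolding C_loop_def
  proof (intro conjI lU ballI)
    fix x y z assume "x \<in> UU" "y \<in> UU" "z \<in> UU"
    then have "x \<in> L" "y \<in> L" "z \<in> L" using UL by auto
    then show "m x (m y (m y z)) = m (m (m x y) y) z" by (rule claw)
  qed
  show "\<forall>x\<in>UU. \<exists>k. elem_ord m e x = 2 ^ k" unfolding UU_def by auto
  show "\<forall>u1\<in>UU. \<forall>u2\<in>UU. \<forall>v1\<in>VV. \<forall>v2\<in>VV.
            m (m u1 v1) (m u2 v2) = m (m u1 u2) (m v1 v2)"
  proof (intro ballI)
    fix u1 u2 v1 v2 assume u1: "u1 \<in> UU" and u2: "u2 \<in> UU" and v1: "v1 \<in> VV" and v2: "v2 \<in> VV"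
    have U1: "u1 \<in> L" "u2 \<in> L" "v1 \<in> L" "v2 \<in> L" using u1 u2 v1 v2 UL VL by auto
    have n1: "nuc v1" and n2: "nuc v2" using nV v1 v2 by auto
    have "m (m u1 v1) (m u2 v2) = m (m (m u1 v1) u2) v2" using nuc3[OF n2] U1 cl by simp
    also have "\<dots> = m (m (m v1 u1) u2) v2" using com[of u1 v1] U1 by simp
    also have "\<dots> = m (m v1 (m u1 u2)) v2" using nuc1[OF n1] U1 by simp
    also have "\<dots> = m (m (m u1 u2) v1) v2" using com[OF U1(3) cl[OF U1(1) U1(2)]] by simp
    also have "\<dots> = m (m u1 u2) (m v1 v2)" using nuc2[OF n1] U1 cl by simp
    finally show "m (m u1 v1) (m u2 v2) = m (m u1 u2) (m v1 v2)" .
  qed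
  show "bij_betw (\<lambda>(u, v). m u v) (UU \<times> VV) L"
    unfolding bij_betw_def
  proof (intro conjI)
    show "inj_on (\<lambda>(u, v). m u v) (UU \<times> VV)"
    proof (rule inj_onI, clarify)
      fix u1 v1 u2 v2 assume u1: "u1 \<in> UU" and v1: "v1 \<in> VV" and u2: "u2 \<in> UU" and v2: "v2 \<in> VV"
        and eq: "m u1 v1 = m u2 v2"
      have U1: "u1 \<in> L" "u2 \<in> L" "v1 \<in> L" "v2 \<in> L" using u1 u2 v1 v2 UL VL by auto
      have n1: "nuc (inv v1)" using nV v1 nuc_inv by simp
      have iv: "inv v1 \<in> L" using inv U1 by simp
      define c where "c = m v2 (inv v1)"
      have cL: "c \<in> L" using c_def cl U1 iv by simp
      have "u1 = m (m u1 v1) (inv v1)" using rip[of u1 v1] U1 by simp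
      also have "\<dots> = m (m u2 v2) (inv v1)" using eq by simp
      also have "\<dots> = m u2 c" using nuc3[OF n1, of u2 v2] U1 c_def by simp
      finally have "m (inv u2) u1 = m (inv u2) (m u2 c)" by simp
      also have "\<dots> = c" using lip[of c u2] U1 cL by simp
      finally have h: "m (inv u2) u1 = c" .
      have "m (inv u2) u1 \<in> UU" using U_mult U_inv u1 u2 by blast
      then have cU: "c \<in> UU" using h by simp
      have cV: "c \<in> VV" unfolding c_def using V_mult V_inv v1 v2 by blast
      obtain k where k: "ord c = 2 ^ k" using cU unfolding UU_def by auto
      have "odd (ord c)" using cV unfolding VV_def by auto
      then have "k = 0" using k by (cases k) auto
      then have ce: "c = e" using ord_one[OF cL] k by simp
      have "v2 = m (m v2 (inv v1)) (inv (inv v1))" using rip[of v2 "inv v1"] U1 iv by simp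
      also have "\<dots> = m e v1" using ce c_def inv_inv[of v1] U1 by simp
      also have "\<dots> = v1" using lid U1 by simp
      finally have v: "v2 = v1" .
      have "m v1 u1 = m u1 v1" using com[of v1 u1] U1 by simp
      also have "\<dots> = m u2 v1" using eq v by simp
      also have "\<dots> = m v1 u2" using com[of u2 v1] U1 by simp
      finally have "u1 = u2" using lcancel[of v1 u1 u2] U1 by simp
      then show "u1 = u2 \<and> v1 = v2" using v by simp
    qed
    show "(\<lambda>(u, v). m u v) ` (UU \<times> VV) = L"
    proof
      show "(\<lambda>(u, v). m u v) ` (UU \<times> VV) \<subseteq> L" using UL VL cl by auto
      show "L \<subseteq> (\<lambda>(u, v). m u v) ` (UU \<times> VV)"
      proof
        fix x assume x: "x \<in> L"
        obtain k q where n: "ord x = 2 ^ k * q" and q: "odd q" using split2[OF ord(1)[OF x]] by blast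
        have q0: "q \<noteq> 0" using q by (cases q) auto
        obtain X Y where XY: "q * X = 2 ^ k * Y + gcd q (2 ^ k)" using bezout_nat[OF q0] by blast
        have "coprime q (2 ^ k)" using q by simp
        then have "gcd q (2 ^ k) = 1" by simp
        then have XY: "q * X = 2 ^ k * Y + 1" using XY by simp
        define u where "u = pw x (X * q)"
        define v where "v = pw x (Y * (q - 1) * 2 ^ k)"
        have uL: "u \<in> L" using u_def pw_in[OF x] by simp
        have vL: "v \<in> L" using v_def pw_in[OF x] by simp
        have "pw u (2 ^ k) = pw x (X * q * 2 ^ k)" using pw_mult[OF x, of "X * q" "2 ^ k"] u_def by simp
        also have "X * q * 2 ^ k = ord x * X" using n by simp
        finally have "pw u (2 ^ k) = pw x (ord x * X)" .
        then have "pw u (2 ^ k) = e" using ord_dvd[OF x, of "ord x * X"] by simp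
        then have "ord u dvd 2 ^ k" using ord_dvd[OF uL] by simp
        then obtain j where "ord u = 2 ^ j" using dvd_pow2 by blast
        then have uU: "u \<in> UU" using uL unfolding UU_def by blast
        have "pw v q = pw x (Y * (q - 1) * 2 ^ k * q)" using pw_mult[OF x, of "Y * (q - 1) * 2 ^ k" q] v_def by simp
        also have "Y * (q - 1) * 2 ^ k * q = ord x * (Y * (q - 1))" using n by simp
        finally have "pw v q = pw x (ord x * (Y * (q - 1)))" .
        then have "pw v q = e" using ord_dvd[OF x, of "ord x * (Y * (q - 1))"] by simp
        then have "ord v dvd q" using ord_dvd[OF vL] by simp
        then have "odd (ord v)" using q dvd_trans[of 2 "ord v" q] by blast
        then have vV: "v \<in> VV" using vL unfolding VV_def by blast
        have ar: "X * q + Y * (q - 1) * 2 ^ k = ord x * Y + 1"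
        proof -
          obtain q' where q': "q = Suc q'" using q0 by (cases q) auto
          have "X * q + Y * (q - 1) * 2 ^ k = (q * X) + Y * q' * 2 ^ k" using q' by (simp add: mult.commute)
          also have "\<dots> = 2 ^ k * Y + 1 + Y * q' * 2 ^ k" using XY by simp
          also have "\<dots> = 2 ^ k * q * Y + 1" using q' by (simp add: algebra_simps)
          finally show ?thesis using n by (simp add: mult.commute)
        qed
        have "m u v = pw x (X * q + Y * (q - 1) * 2 ^ k)" using pw_add[OF x, of "X * q" "Y * (q - 1) * 2 ^ k"] u_def v_def by simp
        also have "\<dots> = pw x (ord x * Y + 1)" using ar by (simp del: lpow.simps)
        also have "\<dots> = m (pw x (ord x * Y)) (pw x 1)" using pw_add[OF x] by blast
        also have "pw x (ord x * Y) = e" using ord_dvd[OF x, of "ord x * Y"] by simp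
        also have "m e (pw x 1) = x" using pw_one[OF x] lid[OF x] by simp
        finally have uv: "m u v = x" .
        have uvS: "(u, v) \<in> UU \<times> VV" using uU vV by simp
        show "x \<in> (\<lambda>(u, v). m u v) ` (UU \<times> VV)"
          by (rule rev_image_eqI[OF uvS]) (simp add: uv)
      qed
    qed
  qed
qed

end

theorem theorem7p3:
  fixes L :: "'a set" and m :: "'a \<Rightarrow> 'a \<Rightarrow> 'a" and e :: 'a
  assumes "finite L" and "C_loop L m e" and "commutative_on L m"
  defines "U \<equiv> {x \<in> L. \<exists>k. elem_ord m e x = 2 ^ k}"
      and "V \<equiv> {x \<in> L. odd (elem_ord m e x)}"
  shows "group_loop V m e \<and> commutative_on V m
       \<and> C_loop U m e \<and> commutative_on U m
       \<and> (\<forall>x\<in>U. \<exists>k. elem_ord m e x = 2 ^ k)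
       \<and> bij_betw (\<lambda>(u, v). m u v) (U \<times> V) L
       \<and> (\<forall>u1\<in>U. \<forall>u2\<in>U. \<forall>v1\<in>V. \<forall>v2\<in>V.
            m (m u1 v1) (m u2 v2) = m (m u1 u2) (m v1 v2))"
proof -
  interpret ccl L m e by (unfold_locales) (rule assms)+
  show ?thesis using main unfolding U_def V_def UU_def VV_def .
qed

end
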